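(* Let $\ell\ge1$, $n\ge1$, ${\mathbf y}_1,\dots,{\mathbf y}_n\in\mathbb{F}_2^\ell$, and let $M=[P_{{\mathbf y}_1}\ P_{{\mathbf y}_2}\ \cdots\ P_{{\mathbf y}_n}]$ be the $2^\ell\times n2^\ell$ binary matrix formed by $n$ dyadic permutation matrices side by side. Then the Tanner graph of $M$ is acyclic, and it has exactly $2^\ell(2^{n-1}-1)$ absorbing sets whose induced subgraphs are connected; each of them is an $(a,0)$-absorbing set with $a$ even and $2\le a\le n$.
   Context: For ${\mathbf a}\in\mathbb{F}_2^\ell$, $P_{\mathbf a}$ is the $2^\ell\times2^\ell$ binary matrix with $(P_{\mathbf a})_{{\mathbf x},{\mathbf y}}=1$ iff ${\mathbf y}={\mathbf x}+{\mathbf a}$ (rows/columns indexed by $\mathbb{F}_2^\ell$). The Tanner graph of a binary matrix is the bipartite graph with check nodes = rows, variable nodes = columns, edges at the $1$-entries. For a nonempty set $\mathcal{A}$ of variable nodes, let $G_{\mathcal{A}\cup\mathcal{N}(\mathcal{A})}$ be the subgraph induced by $\mathcal{A}$ and its neighborhood $\mathcal{N}(\mathcal{A})$. $\mathcal{A}$ is an $(a,b)$-absorbing set if $|\mathcal{A}|=a$, the induced subgraph has exactly $b$ check nodes of odd degree, and every $v\in\mathcal{A}$ has strictly more neighbors of even degree than of odd degree in the induced subgraph. Only absorbing sets whose induced subgraph is connected are counted. *)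

theory Defs
  imports Main
begin

definition F2vec :: "nat \<Rightarrow> bool list set" where
  "F2vec l = {v. length v = l}"

definition vadd :: "bool list \<Rightarrow> bool list \<Rightarrow> bool list" where
  "vadd x a = map2 (\<noteq>) x a"

definition dyadic_perm :: "bool list \<Rightarrow> bool list \<Rightarrow> bool list \<Rightarrow> bool" where
  "dyadic_perm a x y = (y = vadd x a)"

text \<open>Tanner graph: check nodes = rows (Inl), variable nodes = columns (Inr).\<close>

definition tanner_edges :: "'r set \<Rightarrow> 'c set \<Rightarrow> ('r \<Rightarrow> 'c \<Rightarrow> bool) \<Rightarrow> ('r + 'c) rel" where
  "tanner_edges R C H =
     {(Inl x, Inr v) | x v. x \<in> R \<and> v \<in> C \<and> H x v} \<union>
     {(Inr v, Inl x) | x v. x \<in> R \<and> v \<in> C \<and> H x v}"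

definition tanner_acyclic :: "'r set \<Rightarrow> 'c set \<Rightarrow> ('r \<Rightarrow> 'c \<Rightarrow> bool) \<Rightarrow> bool" where
  "tanner_acyclic R C H =
     (\<not> (\<exists>vs. length vs \<ge> 3 \<and> distinct vs \<and>
        (\<forall>i < length vs. (vs ! i, vs ! ((i + 1) mod length vs)) \<in> tanner_edges R C H)))"

definition nbhd :: "'r set \<Rightarrow> ('r \<Rightarrow> 'c \<Rightarrow> bool) \<Rightarrow> 'c set \<Rightarrow> 'r set" where
  "nbhd R H A = {x \<in> R. \<exists>v \<in> A. H x v}"

definition ind_deg :: "('r \<Rightarrow> 'c \<Rightarrow> bool) \<Rightarrow> 'c set \<Rightarrow> 'r \<Rightarrow> nat" where
  "ind_deg H A x = card {v \<in> A. H x v}"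

definition odd_checks :: "'r set \<Rightarrow> ('r \<Rightarrow> 'c \<Rightarrow> bool) \<Rightarrow> 'c set \<Rightarrow> 'r set" where
  "odd_checks R H A = {x \<in> nbhd R H A. odd (ind_deg H A x)}"

definition absorbing_set ::
  "'r set \<Rightarrow> 'c set \<Rightarrow> ('r \<Rightarrow> 'c \<Rightarrow> bool) \<Rightarrow> 'c set \<Rightarrow> nat \<Rightarrow> nat \<Rightarrow> bool" where
  "absorbing_set R C H A a b =
     (A \<subseteq> C \<and> A \<noteq> {} \<and> card A = a \<and> card (odd_checks R H A) = b \<and>
      (\<forall>v \<in> A. card {x \<in> nbhd R H A. H x v \<and> odd (ind_deg H A x)}
               < card {x \<in> nbhd R H A. H x v \<and> even (ind_deg H A x)}))"

definition is_absorbing_set :: "'r set \<Rightarrow> 'c set \<Rightarrow> ('r \<Rightarrow> 'c \<Rightarrow> bool) \<Rightarrow> 'c set \<Rightarrow> bool" where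
  "is_absorbing_set R C H A = (\<exists>a b. absorbing_set R C H A a b)"

definition induced_connected :: "'r set \<Rightarrow> 'c set \<Rightarrow> ('r \<Rightarrow> 'c \<Rightarrow> bool) \<Rightarrow> 'c set \<Rightarrow> bool" where
  "induced_connected R C H A =
     (let V = Inl ` nbhd R H A \<union> Inr ` A;
          E = tanner_edges R C H \<inter> (V \<times> V)
      in \<forall>u \<in> V. \<forall>w \<in> V. (u, w) \<in> E\<^sup>*)"

text \<open>Rows indexed by F_2^l; column (i,y) (with 0 \<le> i < n, y \<in> F_2^l) is column y
  of the i-th block P_{ys i}.\<close>
definition blockM_rows :: "nat \<Rightarrow> bool list set" where
  "blockM_rows l = F2vec l"

definition blockM_cols :: "nat \<Rightarrow> nat \<Rightarrow> (nat \<times> bool list) set" where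
  "blockM_cols n l = {0..<n} \<times> F2vec l"

definition blockM :: "(nat \<Rightarrow> bool list) \<Rightarrow> bool list \<Rightarrow> nat \<times> bool list \<Rightarrow> bool" where
  "blockM ys x c = dyadic_perm (ys (fst c)) x (snd c)"

end

theory Submission
  imports Defs
begin

lemma vadd_len: "length (vadd x a) = min (length x) (length a)"
  by (simp add: vadd_def)

lemma vadd_inv: "length x = length a \<Longrightarrow> vadd (vadd x a) a = x"
proof (induction x arbitrary: a)
  case Nil then show ?case by (simp add: vadd_def)
next
  case (Cons h t) then show ?case by (cases a) (auto simp: vadd_def)
qed

lemma F2vec_finite: "finite (F2vec l)"
  unfolding F2vec_def using finite_lists_length_eq[of "UNIV::bool set" l] by simp

lemma F2vec_card: "card (F2vec l) = 2 ^ l"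
  unfolding F2vec_def using card_lists_length_eq[of "UNIV::bool set" l] by simp

lemma te_iff: "(a, b) \<in> tanner_edges R C H \<longleftrightarrow>
   (\<exists>x v. a = Inl x \<and> b = Inr v \<and> x \<in> R \<and> v \<in> C \<and> H x v) \<or>
   (\<exists>x v. a = Inr v \<and> b = Inl x \<and> x \<in> R \<and> v \<in> C \<and> H x v)"
  unfolding tanner_edges_def by auto

lemma even_subsets:
  assumes "finite A" "a \<in> A"
  shows "card {I. I \<subseteq> A \<and> even (card I)} = 2 ^ (card A - 1)"
proof -
  define t where "t I = (if a \<in> I then I - {a} else insert a I)" for I
  define Ev where "Ev = {I. I \<subseteq> A \<and> even (card I)}"
  define Od where "Od = {I. I \<subseteq> A \<and> odd (card I)}"
  have tt: "t (t I) = I" for I unfolding t_def by auto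
  have inj: "inj_on t X" for X by (metis inj_onI tt)
  have par: "I \<subseteq> A \<Longrightarrow> even (card (t I)) \<longleftrightarrow> odd (card I)" for I
  proof -
    assume "I \<subseteq> A"
    then have fI: "finite I" using assms(1) finite_subset by blast
    show ?thesis
    proof (cases "a \<in> I")
      case True
      then have "card I \<ge> 1" using fI by (metis One_nat_def Suc_leI card_gt_0_iff empty_iff)
      then show ?thesis using True fI by (auto simp: t_def)
    next
      case False then show ?thesis using fI by (auto simp: t_def)
    qed
  qed
  have sub: "I \<subseteq> A \<Longrightarrow> t I \<subseteq> A" for I using assms(2) by (auto simp: t_def)
  have fin: "finite Ev" "finite Od" unfolding Ev_def Od_def using assms(1) by auto
  have "t ` Ev \<subseteq> Od" unfolding Ev_def Od_def using par sub by auto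
  then have l1: "card Ev \<le> card Od" using card_inj_on_le[OF inj] fin by blast
  have "t ` Od \<subseteq> Ev" unfolding Ev_def Od_def using par sub by auto
  then have l2: "card Od \<le> card Ev" using card_inj_on_le[OF inj] fin by blast
  have "Ev \<union> Od = Pow A" "Ev \<inter> Od = {}" unfolding Ev_def Od_def by auto
  then have "card Ev + card Od = 2 ^ card A"
    using card_Un_disjoint[OF fin] card_Pow[OF assms(1)] by simp
  moreover have "card A \<ge> 1" using assms by (metis One_nat_def Suc_leI card_gt_0_iff empty_iff)
  moreover have "card Ev = card Od" using l1 l2 by simp
  ultimately have "2 * card Ev = 2 ^ (Suc (card A - 1))" by simp
  then have "2 * card Ev = 2 * 2 ^ (card A - 1)" by simp
  then show ?thesis unfolding Ev_def by simp
qed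

context
  fixes l n :: nat and ys :: "nat \<Rightarrow> bool list"
  assumes ys: "\<forall>i<n. ys i \<in> F2vec l"
begin

lemma H_iff: "x \<in> F2vec l \<Longrightarrow> (i, y) \<in> blockM_cols n l \<Longrightarrow>
   blockM ys x (i, y) \<longleftrightarrow> x = vadd y (ys i)"
proof -
  assume x: "x \<in> F2vec l" and c: "(i, y) \<in> blockM_cols n l"
  have i: "i < n" and ly: "length y = l" using c unfolding blockM_cols_def F2vec_def by auto
  have la: "length (ys i) = l" using ys i unfolding F2vec_def by auto
  have lx: "length x = l" using x unfolding F2vec_def by auto
  show ?thesis unfolding blockM_def dyadic_perm_def fst_conv snd_conv
  proof
    assume "y = vadd x (ys i)"
    then show "x = vadd y (ys i)" using vadd_inv[of x "ys i"] lx la by simp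
  next
    assume "x = vadd y (ys i)"
    then show "y = vadd x (ys i)" using vadd_inv[of y "ys i"] ly la by simp
  qed
qed

lemma acyc: "tanner_acyclic (blockM_rows l) (blockM_cols n l) (blockM ys)"
  unfolding tanner_acyclic_def
proof
  assume "\<exists>vs. 3 \<le> length vs \<and> distinct vs \<and>
     (\<forall>i<length vs. (vs ! i, vs ! ((i + 1) mod length vs)) \<in> tanner_edges (blockM_rows l) (blockM_cols n l) (blockM ys))"
  then obtain vs where L3: "3 \<le> length vs" and d: "distinct vs" and
    E: "\<forall>i<length vs. (vs ! i, vs ! ((i + 1) mod length vs)) \<in> tanner_edges (blockM_rows l) (blockM_cols n l) (blockM ys)"
    by blast
  define L where "L = length vs"
  have "\<exists>i<L. \<exists>v. vs ! i = Inr v"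
  proof (cases "vs ! 0")
    case (Inl x)
    have "(vs ! 0, vs ! 1) \<in> tanner_edges (blockM_rows l) (blockM_cols n l) (blockM ys)"
    proof -
      have "0 < length vs" "Suc 0 mod length vs = Suc 0" using L3 by auto
      then show ?thesis using E[rule_format, of 0] by simp
    qed
    then obtain v where "vs ! 1 = Inr v" using Inl unfolding te_iff by auto
    then show ?thesis using L3 unfolding L_def by (intro exI[of _ 1]) auto
  next
    case (Inr v) then show ?thesis using L3 L_def by force
  qed
  then obtain i v where iL: "i < L" and vi: "vs ! i = Inr v" by blast
  define p where "p = (i + L - 1) mod L"
  define s where "s = (i + 1) mod L"
  have pL: "p < L" "s < L" using iL unfolding p_def s_def by auto
  have ps: "(p + 1) mod L = i"
  proof -
    have "(p + 1) mod L = (i + L - 1 + 1) mod L" unfolding p_def by (simp add: mod_Suc_eq)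
    also have "\<dots> = (i + L) mod L" using iL by simp
    also have "\<dots> = i" using iL by simp
    finally show ?thesis .
  qed
  have e1: "(vs ! p, Inr v) \<in> tanner_edges (blockM_rows l) (blockM_cols n l) (blockM ys)"
    using E[rule_format, of p] pL ps vi unfolding L_def by simp
  have e2: "(Inr v, vs ! s) \<in> tanner_edges (blockM_rows l) (blockM_cols n l) (blockM ys)"
    using E[rule_format, of i] iL vi unfolding L_def s_def by simp
  obtain x1 where x1: "vs ! p = Inl x1" "x1 \<in> F2vec l" "v \<in> blockM_cols n l" "blockM ys x1 v"
    using e1 unfolding te_iff blockM_rows_def by auto
  obtain x2 where x2: "vs ! s = Inl x2" "x2 \<in> F2vec l" "blockM ys x2 v"
    using e2 unfolding te_iff blockM_rows_def by auto
  have vC: "(fst v, snd v) \<in> blockM_cols n l" using x1(3) by simp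
  have "x1 = vadd (snd v) (ys (fst v))" using H_iff[OF x1(2) vC] x1(4) by simp
  moreover have "x2 = vadd (snd v) (ys (fst v))" using H_iff[OF x2(2) vC] x2(3) by simp
  ultimately have "vs ! p = vs ! s" using x1(1) x2(1) by simp
  then have "p = s" using nth_eq_iff_index_eq[OF d] pL unfolding L_def by blast
  moreover have "p \<noteq> s"
  proof (cases "i = 0")
    case True
    then show ?thesis using L3 unfolding p_def s_def L_def by auto
  next
    case False
    then have e: "i + L - 1 = (i - 1) + L" by simp
    have "p = ((i - 1) + L) mod L" unfolding p_def e by (rule refl)
    also have "\<dots> = (i - 1) mod L" by (rule mod_add_self2)
    also have "\<dots> = i - 1" using iL by simp
    finally have "p = i - 1" .
    moreover have "s = i + 1 \<or> (s = 0 \<and> i + 1 = L)"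
    proof (cases "i + 1 < L")
      case True then show ?thesis unfolding s_def by simp
    next
      case False then have "i + 1 = L" using iL by simp
      then show ?thesis unfolding s_def by simp
    qed
    ultimately show ?thesis using False iL L3 unfolding L_def by auto
  qed
  ultimately show False by simp
qed

abbreviation "RR \<equiv> blockM_rows l"
abbreviation "CC \<equiv> blockM_cols n l"
abbreviation "HH \<equiv> blockM ys"

lemma g_in: "x \<in> F2vec l \<Longrightarrow> i < n \<Longrightarrow> (i, vadd x (ys i)) \<in> CC"
  using ys unfolding blockM_cols_def F2vec_def by (auto simp: vadd_len)

lemma bwd:
  assumes x: "x \<in> F2vec l" and I: "I \<subseteq> {0..<n}" "I \<noteq> {}" "even (card I)"
    and A: "A = (\<lambda>i. (i, vadd x (ys i))) ` I"
  shows "absorbing_set RR CC HH A (card I) 0 \<and> induced_connected RR CC HH A"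
proof -
  have AC: "A \<subseteq> CC" using A I g_in x by auto
  have inj: "inj_on (\<lambda>i. (i, vadd x (ys i))) I" by (auto intro: inj_onI)
  have cA: "card A = card I" using A inj card_image by blast
  have HA: "v \<in> A \<Longrightarrow> HH x v" for v using A unfolding blockM_def dyadic_perm_def by auto
  have uniq: "v \<in> A \<Longrightarrow> x' \<in> F2vec l \<Longrightarrow> HH x' v \<longleftrightarrow> x' = x" for v x'
  proof -
    assume v: "v \<in> A" and x': "x' \<in> F2vec l"
    obtain i y where vv: "v = (i, y)" by fastforce
    have vC: "(i, y) \<in> CC" using v vv AC by auto
    have "HH x v" using HA v .
    then have "x = vadd y (ys i)" using H_iff[OF x vC] vv by simp
    then show ?thesis using H_iff[OF x' vC] vv by simp
  qed
  have nb: "nbhd RR HH A = {x}"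
    unfolding nbhd_def blockM_rows_def using uniq x HA I A by auto
  have deg: "ind_deg HH A x = card A" unfolding ind_deg_def using HA
    by (metis (no_types, lifting) Collect_cong Collect_mem_eq)
  have odd: "odd_checks RR HH A = {}" unfolding odd_checks_def nb using deg cA I by auto
  have cond: "\<forall>v\<in>A. card {x' \<in> nbhd RR HH A. HH x' v \<and> odd (ind_deg HH A x')}
               < card {x' \<in> nbhd RR HH A. HH x' v \<and> even (ind_deg HH A x')}"
  proof
    fix v assume v: "v \<in> A"
    have s1: "{x' \<in> nbhd RR HH A. HH x' v \<and> odd (ind_deg HH A x')} = {}"
      unfolding nb using deg cA I by auto
    have s2: "{x' \<in> nbhd RR HH A. HH x' v \<and> even (ind_deg HH A x')} = {x}"
      unfolding nb using deg cA I HA[OF v] by auto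
    show "card {x' \<in> nbhd RR HH A. HH x' v \<and> odd (ind_deg HH A x')}
               < card {x' \<in> nbhd RR HH A. HH x' v \<and> even (ind_deg HH A x')}" unfolding s1 s2 by simp
  qed
  have ab: "absorbing_set RR CC HH A (card I) 0"
    unfolding absorbing_set_def using AC A I cA odd cond by auto
  have conn: "induced_connected RR CC HH A"
    unfolding induced_connected_def Let_def nb
  proof (intro ballI)
    let ?V = "Inl ` {x} \<union> Inr ` A"
    let ?E = "tanner_edges RR CC HH \<inter> (?V \<times> ?V)"
    have to: "u \<in> ?V \<Longrightarrow> (u, Inl x) \<in> ?E\<^sup>*" for u
    proof -
      assume u: "u \<in> ?V"
      show ?thesis
      proof (cases "u = Inl x")
        case True then show ?thesis by simp
      next
        case False
        then obtain v where "u = Inr v" "v \<in> A" using u by auto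
        then have "(u, Inl x) \<in> ?E" using AC HA x by (auto simp: te_iff blockM_rows_def)
        then show ?thesis by auto
      qed
    qed
    have frm: "w \<in> ?V \<Longrightarrow> (Inl x, w) \<in> ?E\<^sup>*" for w
    proof -
      assume w: "w \<in> ?V"
      show ?thesis
      proof (cases "w = Inl x")
        case True then show ?thesis by simp
      next
        case False
        then obtain v where "w = Inr v" "v \<in> A" using w by auto
        then have "(Inl x, w) \<in> ?E" using AC HA x by (auto simp: te_iff blockM_rows_def)
        then show ?thesis by auto
      qed
    qed
    fix u w assume "u \<in> ?V" "w \<in> ?V"
    then show "(u, w) \<in> ?E\<^sup>*" using to frm by (meson rtrancl_trans)
  qed
  show ?thesis using ab conn by blast
qed

lemma fwd:
  assumes ab: "is_absorbing_set RR CC HH A" and cn: "induced_connected RR CC HH A"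
  shows "\<exists>x\<in>F2vec l. \<exists>I. I \<subseteq> {0..<n} \<and> I \<noteq> {} \<and> even (card I) \<and>
           A = (\<lambda>i. (i, vadd x (ys i))) ` I"
proof -
  obtain a b where "absorbing_set RR CC HH A a b" using ab unfolding is_absorbing_set_def by blast
  then have AC: "A \<subseteq> CC" and Ane: "A \<noteq> {}" and
    cond: "\<forall>v\<in>A. card {x \<in> nbhd RR HH A. HH x v \<and> odd (ind_deg HH A x)}
               < card {x \<in> nbhd RR HH A. HH x v \<and> even (ind_deg HH A x)}"
    unfolding absorbing_set_def by auto
  define c where "c v = vadd (snd v) (ys (fst v))" for v :: "nat \<times> bool list"
  have cR: "v \<in> CC \<Longrightarrow> c v \<in> F2vec l" for v
    using ys unfolding c_def blockM_cols_def F2vec_def by (auto simp: vadd_len)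
  have Hc: "v \<in> CC \<Longrightarrow> x \<in> F2vec l \<Longrightarrow> HH x v \<longleftrightarrow> x = c v" for v x
    using H_iff[of x "fst v" "snd v"] unfolding c_def by simp
  define f where "f u = (case u of Inl x \<Rightarrow> x | Inr v \<Rightarrow> c v)" for u :: "bool list + (nat \<times> bool list)"
  define V where "V = Inl ` nbhd RR HH A \<union> Inr ` A"
  define E where "E = tanner_edges RR CC HH \<inter> (V \<times> V)"
  have edge: "(u, w) \<in> E \<Longrightarrow> f u = f w" for u w
    unfolding E_def f_def using Hc by (auto simp: te_iff blockM_rows_def)
  have rt: "(u, w) \<in> E\<^sup>* \<Longrightarrow> f u = f w" for u w
    by (induct rule: rtrancl_induct) (auto dest: edge)
  have conn: "\<forall>u\<in>V. \<forall>w\<in>V. (u, w) \<in> E\<^sup>*"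
    using cn unfolding induced_connected_def Let_def V_def E_def by simp
  obtain v0 where v0: "v0 \<in> A" using Ane by blast
  define x0 where "x0 = c v0"
  have x0R: "x0 \<in> F2vec l" using cR[of v0] v0 AC unfolding x0_def by blast
  have const: "v \<in> A \<Longrightarrow> c v = x0" for v
  proof -
    assume v: "v \<in> A"
    have "(Inr v, Inr v0) \<in> E\<^sup>*" using conn v v0 unfolding V_def by auto
    then have "f (Inr v) = f (Inr v0)" by (rule rt)
    then show ?thesis unfolding f_def x0_def by simp
  qed
  have HA: "v \<in> A \<Longrightarrow> HH x0 v" for v using Hc[of v x0] const[of v] AC x0R by blast
  define I where "I = fst ` A"
  have Aeq: "A = (\<lambda>i. (i, vadd x0 (ys i))) ` I"
  proof
    show "A \<subseteq> (\<lambda>i. (i, vadd x0 (ys i))) ` I"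
    proof
      fix v assume v: "v \<in> A"
      then have "snd v = vadd x0 (ys (fst v))" using HA[OF v]
        unfolding blockM_def dyadic_perm_def by simp
      then have "v = (\<lambda>i. (i, vadd x0 (ys i))) (fst v)" by (metis prod.collapse)
      then show "v \<in> (\<lambda>i. (i, vadd x0 (ys i))) ` I" unfolding I_def using v by blast
    qed
  next
    show "(\<lambda>i. (i, vadd x0 (ys i))) ` I \<subseteq> A"
    proof
      fix w assume "w \<in> (\<lambda>i. (i, vadd x0 (ys i))) ` I"
      then obtain v where v: "v \<in> A" and w: "w = (fst v, vadd x0 (ys (fst v)))"
        unfolding I_def by auto
      have "snd v = vadd x0 (ys (fst v))" using HA[OF v]
        unfolding blockM_def dyadic_perm_def by simp
      then show "w \<in> A" using v w by (metis prod.collapse)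
    qed
  qed
  have nb: "nbhd RR HH A = {x0}"
  proof
    show "nbhd RR HH A \<subseteq> {x0}"
    proof
      fix x assume "x \<in> nbhd RR HH A"
      then obtain v where x: "x \<in> F2vec l" and v: "v \<in> A" and h: "HH x v"
        unfolding nbhd_def blockM_rows_def by blast
      have "v \<in> CC" using v AC by blast
      then have "x = c v" using Hc[of v x] x h by blast
      then show "x \<in> {x0}" using const[OF v] by simp
    qed
    show "{x0} \<subseteq> nbhd RR HH A" using x0R HA[OF v0] v0 unfolding nbhd_def blockM_rows_def by blast
  qed
  have deg: "ind_deg HH A x0 = card A" unfolding ind_deg_def using HA
    by (metis (no_types, lifting) Collect_cong Collect_mem_eq)
  have "even (card A)"
  proof (rule ccontr)
    assume od: "odd (card A)"
    have s1: "{x \<in> nbhd RR HH A. HH x v0 \<and> odd (ind_deg HH A x)} = {x0}"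
      unfolding nb using deg od HA[OF v0] by auto
    have s2: "{x \<in> nbhd RR HH A. HH x v0 \<and> even (ind_deg HH A x)} = {}"
      unfolding nb using deg od by auto
    have "card {x \<in> nbhd RR HH A. HH x v0 \<and> odd (ind_deg HH A x)}
               < card {x \<in> nbhd RR HH A. HH x v0 \<and> even (ind_deg HH A x)}" using cond v0 by blast
    then show False unfolding s1 s2 by simp
  qed
  moreover have "inj_on (\<lambda>i. (i, vadd x0 (ys i))) I" by (auto intro: inj_onI)
  ultimately have "even (card I)" using Aeq card_image by metis
  moreover have "I \<subseteq> {0..<n}" unfolding I_def using AC unfolding blockM_cols_def by auto
  moreover have "I \<noteq> {}" unfolding I_def using Ane by auto
  ultimately show ?thesis using x0R Aeq by blast
qed

end

theorem mainTheorem8: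
  fixes l n :: nat and ys :: "nat \<Rightarrow> bool list"
  assumes "l \<ge> 1" and "n \<ge> 1" and "\<forall>i < n. ys i \<in> F2vec l"
  shows "tanner_acyclic (blockM_rows l) (blockM_cols n l) (blockM ys) \<and>
    card {A. is_absorbing_set (blockM_rows l) (blockM_cols n l) (blockM ys) A \<and>
             induced_connected (blockM_rows l) (blockM_cols n l) (blockM ys) A}
      = 2 ^ l * (2 ^ (n - 1) - 1) \<and>
    (\<forall>A. is_absorbing_set (blockM_rows l) (blockM_cols n l) (blockM ys) A \<and>
         induced_connected (blockM_rows l) (blockM_cols n l) (blockM ys) A \<longrightarrow>
       (\<exists>a. absorbing_set (blockM_rows l) (blockM_cols n l) (blockM ys) A a 0 \<and>
            even a \<and> 2 \<le> a \<and> a \<le> n))"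
proof -
  let ?R = "blockM_rows l" and ?C = "blockM_cols n l" and ?H = "blockM ys"
  define g where "g x i = (i, vadd x (ys i))" for x i
  define E2 where "E2 = {I. I \<subseteq> {0..<n} \<and> I \<noteq> {} \<and> even (card I)}"
  define S where "S = {A. is_absorbing_set ?R ?C ?H A \<and> induced_connected ?R ?C ?H A}"
  have ys: "\<forall>i<n. ys i \<in> F2vec l" using assms(3) .
  have Seq: "S = (\<lambda>(x, I). g x ` I) ` (F2vec l \<times> E2)"
  proof
    show "S \<subseteq> (\<lambda>(x, I). g x ` I) ` (F2vec l \<times> E2)"
    proof
      fix A assume AS: "A \<in> S"
      have h1: "is_absorbing_set ?R ?C ?H A" and h2: "induced_connected ?R ?C ?H A"
        using AS unfolding S_def by auto
      obtain x I where h: "x \<in> F2vec l" "I \<subseteq> {0..<n}" "I \<noteq> {}" "even (card I)"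
          "A = (\<lambda>i. (i, vadd x (ys i))) ` I"
        by (insert fwd[OF ys h1 h2], elim bexE exE conjE, rule that, assumption+)
      have "I \<in> E2" unfolding E2_def using h by simp
      then have "(x, I) \<in> F2vec l \<times> E2" using h(1) by simp
      moreover have "A = (\<lambda>(x, I). g x ` I) (x, I)" using h(5) unfolding g_def by simp
      ultimately show "A \<in> (\<lambda>(x, I). g x ` I) ` (F2vec l \<times> E2)" by (rule rev_image_eqI)
    qed
  next
    show "(\<lambda>(x, I). g x ` I) ` (F2vec l \<times> E2) \<subseteq> S"
    proof
      fix A assume "A \<in> (\<lambda>(x, I). g x ` I) ` (F2vec l \<times> E2)"
      then obtain p where p: "p \<in> F2vec l \<times> E2" and Ap: "A = (\<lambda>(x, I). g x ` I) p" by blast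
      obtain x I where pp: "p = (x, I)" by fastforce
      have x: "x \<in> F2vec l" and I: "I \<subseteq> {0..<n}" "I \<noteq> {}" "even (card I)"
        using p pp unfolding E2_def by auto
      have AA: "A = (\<lambda>i. (i, vadd x (ys i))) ` I" using Ap pp unfolding g_def by simp
      have "absorbing_set ?R ?C ?H A (card I) 0 \<and> induced_connected ?R ?C ?H A"
        using bwd[OF ys x I AA] .
      then show "A \<in> S" unfolding S_def is_absorbing_set_def by blast
    qed
  qed
  have inj: "inj_on (\<lambda>(x, I). g x ` I) (F2vec l \<times> E2)"
  proof (rule inj_onI)
    fix p q assume p: "p \<in> F2vec l \<times> E2" and q: "q \<in> F2vec l \<times> E2"
      and eq: "(\<lambda>(x, I). g x ` I) p = (\<lambda>(x, I). g x ` I) q"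
    obtain x I where pp: "p = (x, I)" by fastforce
    obtain x' I' where qq: "q = (x', I')" by fastforce
    have e: "g x ` I = g x' ` I'" using eq pp qq by simp
    have "fst ` g x ` I = fst ` g x' ` I'" using e by simp
    then have II: "I = I'" unfolding g_def by (simp add: image_image)
    obtain i where iI: "i \<in> I" using p pp unfolding E2_def by auto
    have "i < n" using iI p pp unfolding E2_def by auto
    then have yl: "length (ys i) = l" using ys unfolding F2vec_def by auto
    have "g x i \<in> g x' ` I'" using e iI by blast
    then have "vadd x (ys i) = vadd x' (ys i)" unfolding g_def by auto
    then have "vadd (vadd x (ys i)) (ys i) = vadd (vadd x' (ys i)) (ys i)" by simp
    then have "x = x'" using vadd_inv yl p q pp qq unfolding F2vec_def by auto
    then show "p = q" using pp qq II by simp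
  qed
  have fE: "finite {I. I \<subseteq> {0..<n} \<and> even (card I)}" by simp
  have cE: "card {I. I \<subseteq> {0..<n} \<and> even (card I)} = 2 ^ (n - 1)"
    using even_subsets[of "{0..<n}" 0] assms(2) by simp
  have "E2 = {I. I \<subseteq> {0..<n} \<and> even (card I)} - {{}}" unfolding E2_def by auto
  then have cE2: "card E2 = 2 ^ (n - 1) - 1" using cE fE by (simp add: card_Diff_singleton)
  have cardS: "card S = 2 ^ l * (2 ^ (n - 1) - 1)"
    unfolding Seq card_image[OF inj] card_cartesian_product F2vec_card cE2 by simp
  have third: "\<forall>A. is_absorbing_set ?R ?C ?H A \<and> induced_connected ?R ?C ?H A \<longrightarrow>
       (\<exists>a. absorbing_set ?R ?C ?H A a 0 \<and> even a \<and> 2 \<le> a \<and> a \<le> n)"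
  proof (intro allI impI)
    fix A assume hA: "is_absorbing_set ?R ?C ?H A \<and> induced_connected ?R ?C ?H A"
    have h1: "is_absorbing_set ?R ?C ?H A" and h2: "induced_connected ?R ?C ?H A"
      using hA by auto
    obtain x I where h: "x \<in> F2vec l" "I \<subseteq> {0..<n}" "I \<noteq> {}" "even (card I)"
          "A = (\<lambda>i. (i, vadd x (ys i))) ` I"
      by (insert fwd[OF ys h1 h2], elim bexE exE conjE, rule that, assumption+)
    have ab: "absorbing_set ?R ?C ?H A (card I) 0" using bwd[OF ys h] by blast
    have le: "card I \<le> n" using card_mono[OF _ h(2)] by simp
    have "finite I" using h(2) finite_subset by blast
    then have "card I \<noteq> 0" using h(3) by simp
    then have "2 \<le> card I" using h(4) by presburger
    then show "\<exists>a. absorbing_set ?R ?C ?H A a 0 \<and> even a \<and> 2 \<le> a \<and> a \<le> n"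
      using ab le h(4) by blast
  qed
  have c1: "tanner_acyclic ?R ?C ?H" by (rule acyc[OF ys])
  have c2: "card {A. is_absorbing_set ?R ?C ?H A \<and> induced_connected ?R ?C ?H A} = 2 ^ l * (2 ^ (n - 1) - 1)"
    using cardS unfolding S_def .
  show ?thesis using c1 c2 third by (rule conjI[OF _ conjI])
qed

end
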